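(* For $n\ge2$ let $m=(n-1)^2$ and let $\Gamma_n$ be the $m\times m$ matrix indexed by $(i,j)\in\{1,\dots,n-1\}^2$ with $$(\Gamma_n)_{(i,j),(i',j')}=\begin{cases}1&(i,j)=(i',j'),\\-\frac1{n-1}& i=i'\text{ or }j=j'\text{ but not both},\\\frac1{(n-1)^2}& i\ne i'\text{ and }j\ne j'.\end{cases}$$ Order the indices row-major ($(1,1),(1,2),\dots,(1,n-1),(2,1),\dots$) and let $\Psi_n=\Gamma_n^{-1}$. Then $\sup_n\|\Psi_n\|_{\max}\le4$, and, with $a^{(n)}_1,\dots,a^{(n)}_m$ the inverse Schur complements of $\Psi_n$ defined in the context, for every $\alpha\ge1$ and every $n\ge2$, $$\sum_{k=1}^{m}(\alpha m)^{-a^{(n)}_k}\ \le\ g(\alpha):=\frac{1+2e^{4/e}+2e^{8/e}+e^{32/e}}{\alpha^{1/4}}.$$ In particular the sequence $(\Gamma_n)$ satisfies the Correlation Condition (in dimension $m=(n-1)^2$) with bounding function $g$.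
   Context: $\|M\|_{\max}=\max_{a,b}|M_{ab}|$. For an invertible $m\times m$ matrix with inverse $\Psi$, let $\Psi_{k}$ be the principal submatrix of the first $k$ rows and columns (in the given index order), partitioned as $\begin{bmatrix}\Psi^{(11)}_{k}&\Psi^{(12)}_{k}\\\Psi^{(21)}_{k}&\Psi^{(22)}_{k}\end{bmatrix}$ with $\Psi^{(11)}_{k}$ the leading $(k-1)\times(k-1)$ block and $\Psi^{(22)}_{k}$ the $(k,k)$ entry; set $a_1=\Psi_{11}^{-1}$ and $a_k=\big(\Psi^{(22)}_{k}-\Psi^{(21)}_{k}(\Psi^{(11)}_{k})^{-1}\Psi^{(12)}_{k}\big)^{-1}$ for $k\ge2$. The Correlation Condition for a sequence of invertible $m\times m$ correlation matrices requires $\sup\|\Psi\|_{\max}<\infty$ and $\sup\sum_{k=1}^m(\alpha m)^{-a_k}\le g(\alpha)$ for all $\alpha\ge1$, with $g$ decreasing, independent of the index of the sequence, and $g(\alpha)\to0$ as $\alpha\to\infty$. ($\Gamma_n$ is the correlation matrix of one increment of the $n\times n$ Diaconis–Gangolli walk restricted to the first $n-1$ rows and columns.) *)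

theory Defs
  imports "HOL-Analysis.Analysis" "Jordan_Normal_Form.Matrix"
begin

text \<open>Matrices are Jordan_Normal_Form matrices with 0-based indices.
  Index p in {0..<(n-1)^2} corresponds (row-major) to the pair
  (i,j) = (p div (n-1) + 1, p mod (n-1) + 1).\<close>

definition Gamma :: "nat \<Rightarrow> real mat" where
  "Gamma n = (let d = n - 1 in
     mat (d^2) (d^2) (\<lambda>(p, q).
       let i = p div d; j = p mod d; i' = q div d; j' = q mod d in
       if i = i' \<and> j = j' then 1
       else if i = i' \<or> j = j' then - 1 / real d
       else 1 / (real d)^2))"

definition minv :: "real mat \<Rightarrow> real mat" where
  "minv A = (THE B. B \<in> carrier_mat (dim_row A) (dim_row A) \<and>
                    A * B = 1\<^sub>m (dim_row A) \<and> B * A = 1\<^sub>m (dim_row A))"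

definition max_norm :: "real mat \<Rightarrow> real" where
  "max_norm A = Max {\<bar>A $$ (a, b)\<bar> | a b. a < dim_row A \<and> b < dim_col A}"

definition lead_sub :: "real mat \<Rightarrow> nat \<Rightarrow> real mat" where
  "lead_sub A k = mat k k (\<lambda>(a, b). A $$ (a, b))"

text \<open>Inverse Schur complements a_k (k = 1..m) of Psi, as in the paper:
  a_1 = 1/Psi_11, and for k >= 2,
  a_k = (Psi22_k - Psi21_k (Psi11_k)^(-1) Psi12_k)^(-1), with the blocks of the
  leading k x k submatrix (the product written out as a double sum).\<close>
definition inv_schur :: "real mat \<Rightarrow> nat \<Rightarrow> real" where
  "inv_schur Psi k =
     (if k = 1 then 1 / Psi $$ (0, 0)
      else (let B = minv (lead_sub Psi (k - 1)) in
        1 / (Psi $$ (k - 1, k - 1)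
             - (\<Sum>a<k - 1. \<Sum>b<k - 1. Psi $$ (k - 1, a) * B $$ (a, b) * Psi $$ (b, k - 1)))))"

definition g_bound :: "real \<Rightarrow> real" where
  "g_bound \<alpha> = (1 + 2 * exp (4 / exp 1) + 2 * exp (8 / exp 1) + exp (32 / exp 1)) / \<alpha> powr (1/4)"

end

theory Submission
  imports Defs "Jordan_Normal_Form.Determinant"
begin


lemma sum_lessThan_add:
  fixes f :: "nat \<Rightarrow> 'a::comm_monoid_add"
  shows "(\<Sum>p<a+b. f p) = (\<Sum>p<a. f p) + (\<Sum>j<b. f (a+j))"
  by (induction b) (simp_all add: add.assoc)

lemma sum_divmod:
  fixes f :: "nat \<Rightarrow> 'a::comm_monoid_add"
  shows "(\<Sum>p<d*e. f p) = (\<Sum>i<e. \<Sum>j<d. f (d*i+j))"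
proof (induction e)
  case 0 then show ?case by simp
next
  case (Suc e)
  have "(\<Sum>p<d*Suc e. f p) = (\<Sum>p<d*e + d. f p)" by (simp add: algebra_simps)
  also have "\<dots> = (\<Sum>p<d*e. f p) + (\<Sum>j<d. f (d*e+j))" by (rule sum_lessThan_add)
  finally show ?case using Suc by simp
qed

definition cc :: "nat \<Rightarrow> real" where "cc d = real d / (real d + 1)"
definition hh :: "nat \<Rightarrow> nat \<Rightarrow> real" where "hh x y = (if x = y then 2 else 1)"
definition ga :: "nat \<Rightarrow> nat \<Rightarrow> nat \<Rightarrow> real" where "ga d x y = (if x = y then 1 else - 1 / real d)"

definition PsiM :: "nat \<Rightarrow> real mat" where
  "PsiM d = mat (d^2) (d^2) (\<lambda>(p,q). (cc d)^2 * hh (p div d) (q div d) * hh (p mod d) (q mod d))"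

lemma Gamma_entry:
  assumes "p < (n-1)^2" "q < (n-1)^2"
  shows "Gamma n $$ (p,q) = ga (n-1) (p div (n-1)) (q div (n-1)) * ga (n-1) (p mod (n-1)) (q mod (n-1))"
  using assms unfolding Gamma_def ga_def Let_def by (auto simp: power2_eq_square)

lemma Gamma_carrier: "Gamma n \<in> carrier_mat ((n-1)^2) ((n-1)^2)"
  unfolding Gamma_def Let_def by simp

lemma PsiM_carrier: "PsiM d \<in> carrier_mat (d^2) (d^2)"
  unfolding PsiM_def by simp

lemma PsiM_entry: "p < d^2 \<Longrightarrow> q < d^2 \<Longrightarrow>
   PsiM d $$ (p,q) = (cc d)^2 * hh (p div d) (q div d) * hh (p mod d) (q mod d)"
  unfolding PsiM_def by simp

lemma ga_hh_sum:
  assumes "d > 0" "u < d" "v < d"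
  shows "(\<Sum>x<d. ga d u x * (cc d * hh x v)) = (if u = v then 1 else 0)"
proof -
  have eq: "\<And>x. ga d u x * (cc d * hh x v) = cc d * ((if x = u then (1 + 1/real d) * hh u v else 0)
        - 1/real d - (if x = v then 1/real d else 0))"
    unfolding ga_def hh_def using assms by (auto simp: field_simps)
  have "(\<Sum>x<d. ga d u x * (cc d * hh x v)) = cc d * ((1 + 1/real d) * hh u v - real d * (1/real d) - 1/real d)"
    unfolding eq sum_distrib_left[symmetric] using assms
    by (simp add: sum_subtractf sum.delta)
  also have "\<dots> = (if u = v then 1 else 0)"
    using assms unfolding cc_def hh_def apply (auto simp: field_simps)
    using assms(1) by (smt (verit) of_nat_0_less_iff mult_pos_pos)
  finally show ?thesis .
qed

lemma sum_sq_nat: "(\<Sum>r<(d::nat)^2. f r) = (\<Sum>i<d. \<Sum>j<d. f (d*i+j))"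
  by (simp add: power2_eq_square sum_divmod)

lemma divmod_simps: "j < (d::nat) \<Longrightarrow> (d*i+j) div d = i" "j < (d::nat) \<Longrightarrow> (d*i+j) mod d = j"
  by simp_all

lemma lt_sq: "i < (d::nat) \<Longrightarrow> j < d \<Longrightarrow> d*i+j < d^2"
proof -
  assume "i<d" "j<d"
  then have "d*i + j < d*i + d" by simp
  also have "\<dots> = d * Suc i" by simp
  also have "\<dots> \<le> d*d" using \<open>i<d\<close> by (intro mult_le_mono2) simp
  finally show ?thesis by (simp add: power2_eq_square)
qed

lemma div_mod_lt: "p < (d::nat)^2 \<Longrightarrow> p div d < d \<and> p mod d < d"
  by (metis div_less_iff_less_mult less_nat_zero_code mod_less_divisor mult.commute neq0_conv
      power2_eq_square mult_0)

lemma Gamma_Psi: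
  assumes n: "n - 1 = d" "d > 0"
  shows "Gamma n * PsiM d = 1\<^sub>m (d^2)" "PsiM d * Gamma n = 1\<^sub>m (d^2)"
proof -
  have d0: "d > 0" using n by simp
  have key: "\<And>p q. p < d^2 \<Longrightarrow> q < d^2 \<Longrightarrow>
     (\<Sum>r<d^2. ga d (p div d) (r div d) * ga d (p mod d) (r mod d) *
          ((cc d)^2 * hh (r div d) (q div d) * hh (r mod d) (q mod d))) = (if p = q then 1 else 0)"
  proof -
    fix p q assume pq: "p < d^2" "q < d^2"
    have "(\<Sum>r<d^2. ga d (p div d) (r div d) * ga d (p mod d) (r mod d) *
          ((cc d)^2 * hh (r div d) (q div d) * hh (r mod d) (q mod d)))
       = (\<Sum>i<d. \<Sum>j<d. (ga d (p div d) i * (cc d * hh i (q div d))) * (ga d (p mod d) j * (cc d * hh j (q mod d))))"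
      unfolding sum_sq_nat by (intro sum.cong refl) (simp add: divmod_simps power2_eq_square algebra_simps)
    also have "\<dots> = (\<Sum>i<d. ga d (p div d) i * (cc d * hh i (q div d))) * (\<Sum>j<d. ga d (p mod d) j * (cc d * hh j (q mod d)))"
      by (simp add: sum_product)
    also have "\<dots> = (if p = q then 1 else 0)"
      using div_mod_lt[OF pq(1)] div_mod_lt[OF pq(2)] d0
      by (simp add: ga_hh_sum) (metis div_mult_mod_eq)
    finally show "?thesis p q" .
  qed
  have key2: "\<And>p q. p < d^2 \<Longrightarrow> q < d^2 \<Longrightarrow>
     (\<Sum>r<d^2. ((cc d)^2 * hh (p div d) (r div d) * hh (p mod d) (r mod d)) *
          (ga d (r div d) (q div d) * ga d (r mod d) (q mod d))) = (if p = q then 1 else 0)"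
  proof -
    fix p q assume pq: "p < d^2" "q < d^2"
    have sy: "\<And>x y. ga d x y = ga d y x" "\<And>x y. hh x y = hh y x" unfolding ga_def hh_def by auto
    have "(\<Sum>r<d^2. ((cc d)^2 * hh (p div d) (r div d) * hh (p mod d) (r mod d)) *
          (ga d (r div d) (q div d) * ga d (r mod d) (q mod d)))
      = (\<Sum>r<d^2. ga d (q div d) (r div d) * ga d (q mod d) (r mod d) *
          ((cc d)^2 * hh (r div d) (p div d) * hh (r mod d) (p mod d)))"
      by (intro sum.cong refl) (simp add: sy algebra_simps)
    also have "\<dots> = (if q = p then 1 else 0)" using key pq by simp
    finally show "?thesis p q" by auto
  qed
  have GC: "Gamma n \<in> carrier_mat (d^2) (d^2)" using Gamma_carrier[of n] n by simp
  have GE: "\<And>p q. p < d^2 \<Longrightarrow> q < d^2 \<Longrightarrow> Gamma n $$ (p,q) = ga d (p div d) (q div d) * ga d (p mod d) (q mod d)"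
    using Gamma_entry[of _ n] n by simp
  show "Gamma n * PsiM d = 1\<^sub>m (d^2)"
  proof (rule eq_matI)
    fix i j assume ij: "i < dim_row (1\<^sub>m (d^2))" "j < dim_col (1\<^sub>m (d^2))"
    have "(Gamma n * PsiM d) $$ (i,j) = (\<Sum>r<d^2. Gamma n $$ (i,r) * PsiM d $$ (r,j))"
      using ij GC PsiM_carrier[of d] by (simp add: scalar_prod_def atLeast0LessThan)
    also have "\<dots> = (if i = j then 1 else 0)"
      using ij key[of i j] by (simp add: GE PsiM_entry)
    finally show "(Gamma n * PsiM d) $$ (i,j) = 1\<^sub>m (d^2) $$ (i,j)" using ij by simp
  qed (use GC PsiM_carrier[of d] in auto)
  show "PsiM d * Gamma n = 1\<^sub>m (d^2)"
  proof (rule eq_matI)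
    fix i j assume ij: "i < dim_row (1\<^sub>m (d^2))" "j < dim_col (1\<^sub>m (d^2))"
    have "(PsiM d * Gamma n) $$ (i,j) = (\<Sum>r<d^2. PsiM d $$ (i,r) * Gamma n $$ (r,j))"
      using ij GC PsiM_carrier[of d] by (simp add: scalar_prod_def atLeast0LessThan)
    also have "\<dots> = (if i = j then 1 else 0)"
      using ij key2[of i j] by (simp add: GE PsiM_entry)
    finally show "(PsiM d * Gamma n) $$ (i,j) = 1\<^sub>m (d^2) $$ (i,j)" using ij by simp
  qed (use GC PsiM_carrier[of d] in auto)
qed

lemma minv_eq:
  assumes A: "A \<in> carrier_mat k k" and B: "B \<in> carrier_mat k k"
    and AB: "A * B = 1\<^sub>m k" and BA: "B * A = 1\<^sub>m k"
  shows "minv A = B"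
  unfolding minv_def
proof (rule the_equality)
  show "B \<in> carrier_mat (dim_row A) (dim_row A) \<and> A * B = 1\<^sub>m (dim_row A) \<and> B * A = 1\<^sub>m (dim_row A)"
    using A B AB BA by simp
next
  fix C assume C: "C \<in> carrier_mat (dim_row A) (dim_row A) \<and> A * C = 1\<^sub>m (dim_row A) \<and> C * A = 1\<^sub>m (dim_row A)"
  then have Ck: "C \<in> carrier_mat k k" "C * A = 1\<^sub>m k" using A by auto
  have "C * (A * B) = C" unfolding AB using Ck(1) by simp
  then have "C = C * (A * B)" by (rule sym)
  also have "\<dots> = (C * A) * B" by (rule assoc_mult_mat[OF Ck(1) A B, symmetric])
  also have "\<dots> = B" using Ck B by simp
  finally show "C = B" .
qed

lemma minv_Gamma:
  assumes "n \<ge> 2"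
  shows "minv (Gamma n) = PsiM (n-1)" "invertible_mat (Gamma n)"
proof -
  have GC: "Gamma n \<in> carrier_mat ((n-1)^2) ((n-1)^2)" by (rule Gamma_carrier)
  have d: "n - 1 = n - 1" "n - 1 > 0" using assms by auto
  show "minv (Gamma n) = PsiM (n-1)"
    by (rule minv_eq[OF GC PsiM_carrier Gamma_Psi[OF d]])
  show "invertible_mat (Gamma n)"
    unfolding invertible_mat_def inverts_mat_def using GC Gamma_Psi[OF d] PsiM_carrier[of "n-1"]
    by (auto intro!: exI[of _ "PsiM (n-1)"])
qed




lemma psd_ind:
  fixes x :: "nat \<Rightarrow> real" and f :: "nat \<Rightarrow> 'b"
  assumes "finite S"
  shows "(\<Sum>p\<in>S. \<Sum>q\<in>S. x p * x q * (if f p = f q then 1 else 0)) \<ge> 0"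
proof -
  define F where "F y = (\<Sum>q\<in>{q\<in>S. f q = y}. x q)" for y
  have "(\<Sum>p\<in>S. \<Sum>q\<in>S. x p * x q * (if f p = f q then 1 else 0)) = (\<Sum>p\<in>S. x p * F (f p))"
  proof (intro sum.cong refl)
    fix p assume "p \<in> S"
    have "(\<Sum>q\<in>S. x p * x q * (if f p = f q then 1 else 0)) = x p * (\<Sum>q\<in>S. if f q = f p then x q else 0)"
      unfolding sum_distrib_left by (intro sum.cong refl) auto
    also have "\<dots> = x p * F (f p)" unfolding F_def using assms by (simp add: sum.inter_filter)
    finally show "(\<Sum>q\<in>S. x p * x q * (if f p = f q then 1 else 0)) = x p * F (f p)" .
  qed
  also have "\<dots> = (\<Sum>y\<in>f ` S. \<Sum>p\<in>{p\<in>S. f p = y}. x p * F (f p))"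
    using assms by (rule sum.image_gen)
  also have "\<dots> = (\<Sum>y\<in>f ` S. F y * F y)"
    by (intro sum.cong refl) (simp add: F_def sum_distrib_right)
  also have "\<dots> \<ge> 0" by (intro sum_nonneg) simp
  finally show ?thesis .
qed

lemma hh_split: "hh a b = 1 + (if a = b then 1 else 0)" unfolding hh_def by simp

lemma psi_quad:
  fixes x :: "nat \<Rightarrow> real"
  assumes "K \<le> d^2" "d > 0"
  shows "(\<Sum>p<K. \<Sum>q<K. x p * x q * PsiM d $$ (p,q)) \<ge> (cc d)^2 * (\<Sum>p<K. x p ^ 2)"
proof -
  let ?S = "{..<K}"
  have e: "\<And>p q. p < K \<Longrightarrow> q < K \<Longrightarrow> x p * x q * PsiM d $$ (p,q) = (cc d)^2 *
      (x p * x q + x p * x q * (if p div d = q div d then 1 else 0)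
      + x p * x q * (if p mod d = q mod d then 1 else 0) + x p * x q * (if p = q then 1 else 0))"
  proof -
    fix p q assume pq: "p < K" "q < K"
    have "p < d^2" "q < d^2" using pq assms by auto
    moreover have "(p div d = q div d \<and> p mod d = q mod d) = (p = q)" by (metis div_mult_mod_eq)
    ultimately show "?thesis p q" by (auto simp: PsiM_entry hh_split algebra_simps)
  qed
  have "(\<Sum>p<K. \<Sum>q<K. x p * x q * PsiM d $$ (p,q)) = (\<Sum>p\<in>?S. \<Sum>q\<in>?S. (cc d)^2 *
      (x p * x q + x p * x q * (if p div d = q div d then 1 else 0)
      + x p * x q * (if p mod d = q mod d then 1 else 0) + x p * x q * (if p = q then 1 else 0)))"
    by (intro sum.cong refl) (simp add: e)
  also have "\<dots> = (cc d)^2 * (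
      (\<Sum>p\<in>?S. \<Sum>q\<in>?S. x p * x q)
    + (\<Sum>p\<in>?S. \<Sum>q\<in>?S. x p * x q * (if p div d = q div d then 1 else 0))
    + (\<Sum>p\<in>?S. \<Sum>q\<in>?S. x p * x q * (if p mod d = q mod d then 1 else 0))
    + (\<Sum>p\<in>?S. \<Sum>q\<in>?S. x p * x q * (if p = q then 1 else 0)))"
    by (simp only: sum_distrib_left[symmetric] sum.distrib)
  also have "(\<Sum>p\<in>?S. \<Sum>q\<in>?S. x p * x q * (if p = q then 1 else 0)) = (\<Sum>p<K. x p ^ 2)"
    by (simp add: power2_eq_square if_distrib[of "\<lambda>t. _ * t"] sum.delta cong: if_cong)
  finally show ?thesis
    using psd_ind[of ?S x "\<lambda>_. ()"] psd_ind[of ?S x "\<lambda>p. p div d"] psd_ind[of ?S x "\<lambda>p. p mod d"]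
    by (simp add: mult_left_mono)
qed

lemma cc_pos: "d > 0 \<Longrightarrow> cc d > 0" unfolding cc_def by simp

lemma lead_inv:
  assumes "K \<le> d^2" "d > 0"
  defines "L \<equiv> lead_sub (PsiM d) K"
  shows "minv L \<in> carrier_mat K K" "minv L * L = 1\<^sub>m K"
proof -
  have LC: "L \<in> carrier_mat K K" unfolding L_def lead_sub_def by simp
  have Le: "\<And>a b. a < K \<Longrightarrow> b < K \<Longrightarrow> L $$ (a,b) = PsiM d $$ (a,b)" unfolding L_def lead_sub_def by simp
  have "det L \<noteq> 0"
  proof
    assume "det L = 0"
    then obtain v where v: "v \<in> carrier_vec K" "v \<noteq> 0\<^sub>v K" "L *\<^sub>v v = 0\<^sub>v K"
      using det_0_iff_vec_prod_zero_field[OF LC] by blast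
    have row0: "\<And>p. p < K \<Longrightarrow> (\<Sum>q<K. PsiM d $$ (p,q) * v $ q) = 0"
    proof -
      fix p assume p: "p < K"
      have "(L *\<^sub>v v) $ p = 0" using v(3) p by simp
      then show "(\<Sum>q<K. PsiM d $$ (p,q) * v $ q) = 0"
        using p LC v(1) by (simp add: scalar_prod_def Le atLeast0LessThan row_def)
    qed
    have "(\<Sum>p<K. \<Sum>q<K. v$p * v$q * PsiM d $$ (p,q)) = (\<Sum>p<K. v$p * (\<Sum>q<K. PsiM d $$ (p,q) * v $ q))"
      by (simp add: sum_distrib_left algebra_simps)
    also have "\<dots> = 0" by (simp add: row0)
    finally have "(cc d)^2 * (\<Sum>p<K. (v$p) ^ 2) \<le> 0" using psi_quad[OF assms(1,2), of "\<lambda>p. v$p"] by simp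
    moreover have "(cc d)^2 > 0" using cc_pos[OF assms(2)] by simp
    ultimately have "(\<Sum>p<K. (v$p) ^ 2) \<le> 0" by (simp add: mult_le_0_iff)
    then have "(\<Sum>p<K. (v$p) ^ 2) = 0" by (intro antisym) (simp_all add: sum_nonneg)
    then have "\<forall>p\<in>{..<K}. (v$p)^2 = 0" by (subst (asm) sum_nonneg_eq_0_iff) auto
    then have "v = 0\<^sub>v K" using v(1) by (intro eq_vecI) auto
    then show False using v(2) by simp
  qed
  then have "L \<in> Units (ring_mat TYPE(real) K ())" by (rule det_non_zero_imp_unit[OF LC])
  then obtain B where B: "B \<in> carrier_mat K K" "B * L = 1\<^sub>m K" "L * B = 1\<^sub>m K"
    unfolding Units_def ring_mat_def by auto
  have "minv L = B" by (rule minv_eq[OF LC B(1) B(3) B(2)])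
  then show "minv L \<in> carrier_mat K K" "minv L * L = 1\<^sub>m K" using B by auto
qed




definition rr :: "nat \<Rightarrow> nat \<Rightarrow> real" where
  "rr I x = (if x = I then 1 else if x < I then - 1 / (real I + 1) else 0)"

lemma rr_sum: assumes "I < d" shows "(\<Sum>x<d. rr I x) = 1 / (real I + 1)"
proof -
  have "(\<Sum>x<d. rr I x) = (\<Sum>x<d. (if x = I then 1 else 0) + (if x < I then - 1 / (real I + 1) else 0))"
    unfolding rr_def by (intro sum.cong refl) auto
  also have "\<dots> = 1 / (real I + 1)"
  proof -
    have ce: "{x\<in>{..<d}. x < I} = {..<I}" using assms by auto
    have "(\<Sum>x<d. (if x < I then - 1 / (real I + 1) else 0)) = (\<Sum>x\<in>{x\<in>{..<d}. x < I}. - 1 / (real I + 1))"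
      by (rule sum.inter_filter[symmetric]) simp
    also have "\<dots> = - real I / (real I + 1)" unfolding ce by simp
    finally have "(\<Sum>x<d. (if x < I then - 1 / (real I + 1) else 0)) = - real I / (real I + 1)" .
    then show ?thesis using assms by (simp add: sum.distrib field_simps)
  qed
  finally show ?thesis .
qed

lemma hr_sum:
  assumes "I < d" "z < d"
  shows "(\<Sum>x<d. cc d * hh z x * rr I x) =
     cc d * (if z < I then 0 else if z = I then 1 + 1 / (real I + 1) else 1 / (real I + 1))"
proof -
  have "(\<Sum>x<d. cc d * hh z x * rr I x) = (\<Sum>x<d. cc d * (rr I x + (if x = z then rr I z else 0)))"
    by (intro sum.cong refl) (auto simp: hh_def)
  also have "\<dots> = cc d * ((\<Sum>x<d. rr I x) + (\<Sum>x<d. if x = z then rr I z else 0))"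
    by (simp only: sum_distrib_left[symmetric] sum.distrib)
  also have "\<dots> = cc d * (1 / (real I + 1) + rr I z)" using assms by (simp add: rr_sum)
  also have "\<dots> = cc d * (if z < I then 0 else if z = I then 1 + 1 / (real I + 1) else 1 / (real I + 1))"
    unfolding rr_def by auto
  finally show ?thesis .
qed

definition uu :: "nat \<Rightarrow> nat \<Rightarrow> nat \<Rightarrow> real" where
  "uu d K b = rr (K div d) (b div d) * rr (K mod d) (b mod d)"

lemma P_sum:
  assumes "d > 0" "K < d^2" "q < d^2"
  shows "(\<Sum>b<d^2. PsiM d $$ (q,b) * uu d K b) =
     (cc d * (if q div d < K div d then 0 else if q div d = K div d then 1 + 1 / (real (K div d) + 1) else 1 / (real (K div d) + 1)))
   * (cc d * (if q mod d < K mod d then 0 else if q mod d = K mod d then 1 + 1 / (real (K mod d) + 1) else 1 / (real (K mod d) + 1)))"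
proof -
  have qq: "q div d < d" "q mod d < d" "K div d < d" "K mod d < d" using div_mod_lt assms by auto
  have "(\<Sum>b<d^2. PsiM d $$ (q,b) * uu d K b) =
     (\<Sum>i<d. \<Sum>j<d. (cc d * hh (q div d) i * rr (K div d) i) * (cc d * hh (q mod d) j * rr (K mod d) j))"
    unfolding sum_sq_nat
  proof (intro sum.cong refl)
    fix i j assume ij: "i \<in> {..<d}" "j \<in> {..<d}"
    have "PsiM d $$ (q, d*i+j) = (cc d)^2 * hh (q div d) i * hh (q mod d) j"
      using PsiM_entry[OF assms(3) lt_sq] ij divmod_simps by simp
    moreover have "uu d K (d*i+j) = rr (K div d) i * rr (K mod d) j" using ij divmod_simps uu_def by simp
    ultimately show "PsiM d $$ (q, d*i+j) * uu d K (d*i+j) = (cc d * hh (q div d) i * rr (K div d) i) * (cc d * hh (q mod d) j * rr (K mod d) j)"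
      by (simp add: power2_eq_square algebra_simps)
  qed
  also have "\<dots> = (\<Sum>i<d. cc d * hh (q div d) i * rr (K div d) i) * (\<Sum>j<d. cc d * hh (q mod d) j * rr (K mod d) j)"
    by (simp add: sum_product)
  finally show ?thesis using qq by (simp add: hr_sum)
qed

lemma uu_zero: assumes "d > 0" "K < b" shows "uu d K b = 0"
proof -
  have "K div d \<le> b div d" using assms by (simp add: div_le_mono)
  moreover have "K div d = b div d \<Longrightarrow> K mod d < b mod d"
    using assms by (metis add_less_cancel_left div_mult_mod_eq)
  ultimately show ?thesis unfolding uu_def rr_def by auto
qed

lemma uu_K: "uu d K K = 1" unfolding uu_def rr_def by simp

lemma P_split:
  assumes "d > 0" "K < d^2" "q < d^2"
  shows "(\<Sum>b<d^2. PsiM d $$ (q,b) * uu d K b) = (\<Sum>b<K. PsiM d $$ (q,b) * uu d K b) + PsiM d $$ (q,K)"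
proof -
  have e: "d^2 = Suc K + (d^2 - Suc K)" using assms by simp
  have "(\<Sum>b<d^2. PsiM d $$ (q,b) * uu d K b) = (\<Sum>b<Suc K. PsiM d $$ (q,b) * uu d K b) + (\<Sum>j<d^2 - Suc K. PsiM d $$ (q,Suc K + j) * uu d K (Suc K + j))"
    by (subst e, rule sum_lessThan_add)
  also have "(\<Sum>j<d^2 - Suc K. PsiM d $$ (q,Suc K + j) * uu d K (Suc K + j)) = 0"
    using uu_zero[OF assms(1)] by simp
  finally show ?thesis by (simp add: uu_K)
qed

lemma schur_val:
  assumes d: "d > 0" and K: "K < d^2"
  shows "inv_schur (PsiM d) (Suc K) =
     1 / ((cc d)^2 * (1 + 1 / (real (K div d) + 1)) * (1 + 1 / (real (K mod d) + 1)))"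
proof (cases "K = 0")
  case True
  then show ?thesis using d K by (simp add: inv_schur_def PsiM_entry hh_def)
next
  case False
  let ?P = "PsiM d"
  let ?L = "lead_sub ?P K"
  let ?B = "minv ?L"
  define w where "w b = - uu d K b" for b
  have BC: "?B \<in> carrier_mat K K" and BL: "?B * ?L = 1\<^sub>m K" using lead_inv[of K d] d K by auto
  have BL': "\<And>a c. a < K \<Longrightarrow> c < K \<Longrightarrow> (\<Sum>b<K. ?B $$ (a,b) * ?P $$ (b,c)) = (if a = c then 1 else 0)"
  proof -
    fix a c assume ac: "a < K" "c < K"
    have "(?B * ?L) $$ (a,c) = (if a = c then 1 else 0)" using BL ac by simp
    then show "?thesis a c" using ac BC
      by (simp add: scalar_prod_def lead_sub_def atLeast0LessThan row_def col_def)
  qed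
  have Lw: "\<And>q. q < K \<Longrightarrow> (\<Sum>c<K. ?P $$ (q,c) * w c) = ?P $$ (q,K)"
  proof -
    fix q assume q: "q < K"
    have qd: "q < d^2" using q K by simp
    have "q div d \<le> K div d" using q by (simp add: div_le_mono)
    moreover have "q div d = K div d \<Longrightarrow> q mod d < K mod d"
      using q by (metis add_less_cancel_left div_mult_mod_eq)
    ultimately have "(\<Sum>b<d^2. ?P $$ (q,b) * uu d K b) = 0"
      using P_sum[OF d K qd] by auto
    then show "(\<Sum>c<K. ?P $$ (q,c) * w c) = ?P $$ (q,K)"
      using P_split[OF d K qd] by (simp add: w_def sum_negf)
  qed
  have inner: "\<And>a. a < K \<Longrightarrow> (\<Sum>b<K. ?B $$ (a,b) * ?P $$ (b,K)) = w a"
  proof -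
    fix a assume a: "a < K"
    have "(\<Sum>b<K. ?B $$ (a,b) * ?P $$ (b,K)) = (\<Sum>b<K. ?B $$ (a,b) * (\<Sum>c<K. ?P $$ (b,c) * w c))"
      by (intro sum.cong refl) (simp add: Lw)
    also have "\<dots> = (\<Sum>b<K. \<Sum>c<K. ?B $$ (a,b) * ?P $$ (b,c) * w c)"
      by (simp only: sum_distrib_left mult.assoc)
    also have "\<dots> = (\<Sum>c<K. \<Sum>b<K. ?B $$ (a,b) * ?P $$ (b,c) * w c)"
      by (rule sum.swap)
    also have "\<dots> = (\<Sum>c<K. (\<Sum>b<K. ?B $$ (a,b) * ?P $$ (b,c)) * w c)"
      by (simp only: sum_distrib_right)
    also have "\<dots> = (\<Sum>c<K. (if a = c then w c else 0))"
      using a by (intro sum.cong refl) (simp add: BL')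
    also have "\<dots> = w a" using a by simp
    finally show "?thesis a" .
  qed
  have S: "(\<Sum>a<K. \<Sum>b<K. ?P $$ (K, a) * ?B $$ (a, b) * ?P $$ (b, K)) = (\<Sum>a<K. ?P $$ (K,a) * w a)"
  proof (intro sum.cong refl)
    fix a assume "a \<in> {..<K}"
    then have a: "a < K" by simp
    have "(\<Sum>b<K. ?P $$ (K, a) * ?B $$ (a, b) * ?P $$ (b, K)) = ?P $$ (K, a) * (\<Sum>b<K. ?B $$ (a, b) * ?P $$ (b, K))"
      by (simp only: mult.assoc sum_distrib_left[symmetric])
    then show "(\<Sum>b<K. ?P $$ (K, a) * ?B $$ (a, b) * ?P $$ (b, K)) = ?P $$ (K,a) * w a"
      using inner[OF a] by simp
  qed
  have "?P $$ (K,K) - (\<Sum>a<K. ?P $$ (K,a) * w a) = (\<Sum>b<d^2. ?P $$ (K,b) * uu d K b)"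
    using P_split[OF d K K] by (simp add: w_def sum_negf)
  also have "\<dots> = (cc d)^2 * (1 + 1 / (real (K div d) + 1)) * (1 + 1 / (real (K mod d) + 1))"
    using P_sum[OF d K K] by (simp add: power2_eq_square)
  finally have Q: "?P $$ (K,K) - (\<Sum>a<K. ?P $$ (K,a) * w a) = (cc d)^2 * (1 + 1 / (real (K div d) + 1)) * (1 + 1 / (real (K mod d) + 1))" .
  show ?thesis using False unfolding inv_schur_def Let_def by (simp add: S Q)
qed




lemma exp_cube: assumes "y \<ge> 0" shows "(1 + y/3)^3 \<le> exp (y::real)"
proof -
  have "1 + y/3 \<le> exp (y/3)" by simp
  then have "(1 + y/3)^3 \<le> exp (y/3) ^ 3" using assms by (intro power_mono) auto
  also have "exp (y/3) ^ 3 = exp y" by (simp add: exp_of_nat_mult[symmetric])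
  finally show ?thesis .
qed

lemma term_bound:
  fixes D s :: real
  assumes D: "D \<ge> 1" and s: "s \<ge> 2"
  shows "D powr (2/s - 1) \<le> exp 1 / D + 12 / (s*(s-1))"
proof (cases "D powr (2/s) \<le> exp 1")
  case True
  have "D powr (2/s - 1) = D powr (2/s) / D" using D by (simp add: powr_diff)
  also have "\<dots> \<le> exp 1 / D" using True D by (simp add: divide_right_mono)
  also have "\<dots> \<le> exp 1 / D + 12 / (s*(s-1))" using s by simp
  finally show ?thesis .
next
  case False
  have Dp: "D > 0" using D by simp
  have "exp 1 < exp ((2/s) * ln D)" using False Dp by (simp add: powr_def)
  then have "1 < (2/s) * ln D" by simp
  then have lnD: "ln D > s/2" using s by (simp add: field_simps)
  define y where "y = s/2 - 1"
  have y0: "y \<ge> 0" using s unfolding y_def by simp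
  have "(2/s - 1) * ln D \<le> (2/s - 1) * (s/2)"
    using lnD s by (intro mult_left_mono_neg) (auto simp: field_simps)
  also have "\<dots> = - y" using s unfolding y_def by (simp add: field_simps)
  finally have le: "(2/s - 1) * ln D \<le> - y" .
  have "D powr (2/s - 1) = exp ((2/s - 1) * ln D)" using Dp by (simp add: powr_def)
  also have "\<dots> \<le> exp (- y)" using le by simp
  also have "\<dots> \<le> 12 / (s*(s-1))"
  proof -
    have sy: "s = 2*y + 2" unfolding y_def by simp
    have e1: "s*(s-1) = 4*y^2 + 6*y + 2" unfolding sy by (simp add: power2_eq_square algebra_simps)
    have e2: "12 * (1 + y/3)^3 = 12 + 12*y + 4*y^2 + (4/9)*y^3"
      by (simp add: power2_eq_square power3_eq_cube field_simps)
    have "y^3 \<ge> 0" using y0 by simp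
    then have "s*(s-1) \<le> 12 * (1 + y/3)^3" unfolding e1 e2 using y0 by linarith
    also have "\<dots> \<le> 12 * exp y" using exp_cube[OF y0] by simp
    finally have h: "s*(s-1) \<le> 12 * exp y" .
    have sp: "s*(s-1) > 0" using s by simp
    show ?thesis using h sp by (simp add: exp_minus field_simps)
  qed
  finally show ?thesis using D by (smt (verit) divide_nonneg_nonneg exp_gt_zero)
qed

lemma telescope: "(\<Sum>I<d. 1 / ((real I + 1) * (real I + 2))) = 1 - 1 / (real d + 1)"
proof (induction d)
  case 0 then show ?case by simp
next
  case (Suc d)
  have "(\<Sum>I<Suc d. 1 / ((real I + 1) * (real I + 2))) = 1 - 1 / (real d + 1) + 1 / ((real d + 1) * (real d + 2))"
    using Suc by simp
  also have "\<dots> = 1 - 1 / (real (Suc d) + 1)"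
  proof -
    have p1: "real d + 1 > 0" "real d + 2 > 0" by auto
    have "1 / ((real d + 1) * (real d + 2)) = 1 / (real d + 1) - 1 / (real d + 2)"
      using p1 by (simp add: field_simps)
    moreover have "real (Suc d) + 1 = real d + 2" by simp
    ultimately show ?thesis by simp
  qed
  finally show ?case .
qed

lemma tsum_bound:
  fixes d :: nat and b :: "nat \<Rightarrow> real"
  assumes d: "d > 0" and b: "\<And>I. I < d \<Longrightarrow> b I \<ge> (real I + 1) / (real I + 2)"
  shows "(\<Sum>I<d. real d powr (1 - 2 * b I)) \<le> exp 1 + 12"
proof -
  have "(\<Sum>I<d. real d powr (1 - 2 * b I)) \<le> (\<Sum>I<d. exp 1 / real d + 12 * (1 / ((real I + 1) * (real I + 2))))"
  proof (intro sum_mono)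
    fix I assume I: "I \<in> {..<d}"
    have "real d powr (1 - 2 * b I) \<le> real d powr (2 / (real I + 2) - 1)"
    proof (intro powr_mono)
      have "(real I + 1) / (real I + 2) \<le> b I" using b I by simp
      then have "1 - 2 * b I \<le> 1 - 2 * ((real I + 1) / (real I + 2))" by linarith
      also have "\<dots> = 2 / (real I + 2) - 1" by (simp add: field_simps)
      finally show "1 - 2 * b I \<le> 2 / (real I + 2) - 1" .
    qed (use d in simp)
    also have "\<dots> \<le> exp 1 / real d + 12 / ((real I + 2) * ((real I + 2) - 1))"
      by (rule term_bound) (use d in auto)
    also have "\<dots> = exp 1 / real d + 12 * (1 / ((real I + 1) * (real I + 2)))"
      by (simp add: algebra_simps)
    finally show "real d powr (1 - 2 * b I) \<le> exp 1 / real d + 12 * (1 / ((real I + 1) * (real I + 2)))" .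
  qed
  also have "\<dots> = exp 1 + 12 * (1 - 1 / (real d + 1))"
    by (simp only: sum.distrib sum_distrib_left[symmetric] telescope) (use d in simp)
  also have "\<dots> \<le> exp 1 + 12" by simp
  finally show ?thesis .
qed

lemma pair_bound:
  fixes \<alpha> D b c :: real
  assumes a: "\<alpha> \<ge> 1" and D: "D \<ge> 1" and b: "1/2 \<le> b" "b \<le> 1" and c: "1/2 \<le> c" "c \<le> 1"
  shows "(\<alpha> * D^2) powr (- (b * c)) \<le> \<alpha> powr (-1/4) * (D powr (1 - 2*b) * D powr (1 - 2*c))"
proof -
  have "(\<alpha> * D^2) powr (- (b * c)) = \<alpha> powr (- (b*c)) * (D powr (-(b*c)) * D powr (-(b*c)))"
    using a D by (simp add: powr_mult power2_eq_square)
  also have "\<dots> = \<alpha> powr (- (b*c)) * D powr (-2*(b*c))"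
    by (simp add: powr_add[symmetric])
  also have "\<dots> \<le> \<alpha> powr (-1/4) * D powr ((1 - 2*b) + (1 - 2*c))"
  proof (intro mult_mono powr_mono)
    have "1/4 \<le> b * c" using b c mult_mono[of "1/2" b "1/2" c] by simp
    then show "- (b*c) \<le> -1/4" by simp
    have "0 \<le> (1 - b) * (1 - c)" using b c by simp
    then show "-2*(b*c) \<le> (1 - 2*b) + (1 - 2*c)" by (simp add: algebra_simps)
  qed (use a D in auto)
  also have "\<dots> = \<alpha> powr (-1/4) * (D powr (1 - 2*b) * D powr (1 - 2*c))"
    by (simp only: powr_add)
  finally show ?thesis .
qed

lemma exp10: "exp (10::real) \<ge> 1024"
proof -
  have "(2::real)^10 \<le> exp 1 ^ 10" using exp_ge_add_one_self[of 1] by (intro power_mono) auto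
  also have "exp 1 ^ 10 = exp (10::real)" by (simp add: exp_of_nat_mult[symmetric])
  finally show ?thesis by simp
qed

lemma const_bound: "(exp 1 + 12)^2 \<le> (1 + 2 * exp (4 / exp 1) + 2 * exp (8 / exp 1) + exp (32 / exp (1::real)))"
proof -
  have e3: "exp 1 \<le> (3::real)" by (rule exp_le)
  have "10 \<le> 32 / exp (1::real)" using e3 by (simp add: field_simps)
  then have h0: "exp 10 \<le> exp (32 / exp (1::real))" by (subst exp_le_cancel_iff)
  have h: "1024 \<le> exp (32 / exp (1::real))" using exp10 h0 by linarith
  have "(exp 1 + 12)^2 \<le> (15::real)^2" using e3 by (intro power_mono) auto
  then have "(exp 1 + 12)^2 \<le> (225::real)" by simp
  moreover have "0 \<le> exp (4 / exp (1::real))" "0 \<le> exp (8 / exp (1::real))" by auto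
  ultimately show ?thesis using h by linarith
qed




definition bb :: "nat \<Rightarrow> nat \<Rightarrow> real" where
  "bb d I = 1 / (cc d * (1 + 1 / (real I + 1)))"

lemma bb_eq: "d > 0 \<Longrightarrow> bb d I = (real d + 1) * (real I + 1) / (real d * (real I + 2))"
  unfolding bb_def cc_def by (simp add: field_simps)

lemma bb_props:
  assumes "d > 0" "I < d"
  shows "(real I + 1) / (real I + 2) \<le> bb d I" "bb d I \<le> 1" "1/2 \<le> bb d I"
proof -
  have I1: "real I + 1 \<le> real d" using assms by linarith
  have dp: "real d > 0" using assms by simp
  have k: "1 \<le> (real d + 1) / real d" using dp by simp
  have x0: "0 \<le> (real I + 1) / (real I + 2)" by simp
  have be: "bb d I = ((real d + 1) / real d) * ((real I + 1) / (real I + 2))"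
    unfolding bb_eq[OF assms(1)] by simp
  show a: "(real I + 1) / (real I + 2) \<le> bb d I"
    unfolding be using mult_right_mono[OF k x0] by simp
  have num: "(real d + 1) * (real I + 1) \<le> real d * (real I + 2)" using I1 by (simp add: algebra_simps)
  have den: "0 < real d * (real I + 2)" using dp by simp
  show "bb d I \<le> 1"
    unfolding bb_eq[OF assms(1)] using num den by simp
  have "1/2 \<le> (real I + 1) / (real I + 2)" by (simp add: field_simps)
  with a show "1/2 \<le> bb d I" by linarith
qed

lemma schur_bb:
  assumes "d > 0" "I < d" "J < d"
  shows "inv_schur (PsiM d) (Suc (d*I+J)) = bb d I * bb d J"
  using schur_val[OF assms(1) lt_sq[OF assms(2,3)]] assms
  by (simp add: divmod_simps bb_def power2_eq_square)

lemma max_norm_Psi: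
  assumes "d > 0"
  shows "max_norm (PsiM d) \<le> 4"
proof -
  let ?A = "PsiM d"
  define S where "S = {\<bar>?A $$ (a, b)\<bar> | a b. a < d^2 \<and> b < d^2}"
  have dims: "dim_row ?A = d^2" "dim_col ?A = d^2" using PsiM_carrier[of d] by auto
  have mS: "max_norm ?A = Max S" unfolding max_norm_def S_def dims ..
  have "S \<subseteq> (\<lambda>(a,b). \<bar>?A $$ (a, b)\<bar>) ` ({..<d^2} \<times> {..<d^2})" unfolding S_def by auto
  then have fin: "finite S" by (rule finite_subset) auto
  have pos: "0 < d^2" using assms by simp
  have "\<exists>a b. \<bar>?A $$ (0, 0)\<bar> = \<bar>?A $$ (a, b)\<bar> \<and> a < d^2 \<and> b < d^2" using pos by blast
  then have "\<bar>?A $$ (0, 0)\<bar> \<in> S" unfolding S_def by auto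
  then have ne: "S \<noteq> {}" by auto
  have cc1: "0 \<le> cc d" "cc d \<le> 1" unfolding cc_def by auto
  have all4: "\<forall>x\<in>S. x \<le> 4"
  proof
    fix x assume "x \<in> S"
    then obtain a b where ab: "a < d^2" "b < d^2" "x = \<bar>?A $$ (a,b)\<bar>" unfolding S_def by blast
    define P where "P = hh (a div d) (b div d) * hh (a mod d) (b mod d)"
    have P: "0 \<le> P" "P \<le> 4" unfolding P_def hh_def by auto
    have c2: "(cc d)^2 \<le> 1" using cc1 by (simp add: power_le_one)
    have "(cc d)^2 * P \<le> 1 * 4" using mult_mono[OF c2 P(2) zero_le_one P(1)] .
    moreover have "0 \<le> (cc d)^2 * P" using P by simp
    moreover have "x = \<bar>(cc d)^2 * P\<bar>" using ab by (simp add: PsiM_entry P_def mult.assoc)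
    ultimately show "x \<le> 4" by simp
  qed
  have "Max S \<le> 4" using Max_le_iff[OF fin ne] all4 by blast
  then show ?thesis unfolding mS .
qed

lemma sum_part:
  fixes \<alpha> :: real
  assumes a: "\<alpha> \<ge> 1" and d: "d > 0"
  shows "(\<Sum>k=1..d^2. (\<alpha> * real (d^2)) powr (- inv_schur (PsiM d) k)) \<le> g_bound \<alpha>"
proof -
  define tt where "tt I = real d powr (1 - 2 * bb d I)" for I
  have "(\<Sum>k=1..d^2. (\<alpha> * real (d^2)) powr (- inv_schur (PsiM d) k))
      = (\<Sum>K<d^2. (\<alpha> * real (d^2)) powr (- inv_schur (PsiM d) (Suc K)))"
    unfolding One_nat_def by (rule sum.atLeast1_atMost_eq)
  also have "\<dots> = (\<Sum>I<d. \<Sum>J<d. (\<alpha> * (real d)^2) powr (- (bb d I * bb d J)))"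
    unfolding sum_sq_nat by (intro sum.cong refl) (simp add: schur_bb d)
  also have "\<dots> \<le> (\<Sum>I<d. \<Sum>J<d. \<alpha> powr (-1/4) * (tt I * tt J))"
  proof (intro sum_mono)
    fix I J assume IJ: "I \<in> {..<d}" "J \<in> {..<d}"
    show "(\<alpha> * (real d)^2) powr (- (bb d I * bb d J)) \<le> \<alpha> powr (-1/4) * (tt I * tt J)"
      unfolding tt_def using bb_props[OF d, of I] bb_props[OF d, of J] IJ d a
      by (intro pair_bound) auto
  qed
  also have "\<dots> = \<alpha> powr (-1/4) * ((\<Sum>I<d. tt I) * (\<Sum>J<d. tt J))"
  proof -
    have sp: "(\<Sum>I<d. tt I) * (\<Sum>J<d. tt J) = (\<Sum>I<d. \<Sum>J<d. tt I * tt J)" by (rule sum_product)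
    show ?thesis unfolding sp by (simp only: sum_distrib_left)
  qed
  also have "\<dots> \<le> \<alpha> powr (-1/4) * ((exp 1 + 12)^2)"
  proof (intro mult_left_mono)
    have t: "(\<Sum>I<d. tt I) \<le> exp 1 + 12" unfolding tt_def
      by (rule tsum_bound[OF d]) (use bb_props[OF d] in auto)
    have "0 \<le> (\<Sum>I<d. tt I)" unfolding tt_def by (intro sum_nonneg) simp
    then show "(\<Sum>I<d. tt I) * (\<Sum>J<d. tt J) \<le> (exp 1 + 12)^2"
      using t by (simp add: power2_eq_square mult_mono)
  qed simp
  also have "\<dots> \<le> \<alpha> powr (-1/4) * (1 + 2 * exp (4 / exp 1) + 2 * exp (8 / exp 1) + exp (32 / exp 1))"
    by (intro mult_left_mono const_bound) simp
  also have "\<dots> = g_bound \<alpha>"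
  proof -
    have h: "\<alpha> powr (-1/4) = inverse (\<alpha> powr (1/4))" using powr_minus[of \<alpha> "1/4"] by simp
    show ?thesis unfolding g_bound_def h by (metis divide_inverse mult.commute)
  qed
  finally show ?thesis .
qed

lemma g_mono: "1 \<le> x \<Longrightarrow> x \<le> y \<Longrightarrow> g_bound y \<le> g_bound x"
proof -
  assume xy: "1 \<le> x" "x \<le> y"
  have C: "0 \<le> 1 + 2 * exp (4 / exp 1) + 2 * exp (8 / exp 1) + exp (32 / exp (1::real))"
    by (intro add_nonneg_nonneg) auto
  have le: "x powr (1/4) \<le> y powr (1/4)" using xy by (intro powr_mono2) auto
  have p1: "0 < x powr (1/4)" "0 < y powr (1/4)" using xy by auto
  have pos: "0 < y powr (1/4) * x powr (1/4)" by (rule mult_pos_pos[OF p1(2) p1(1)])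
  show ?thesis unfolding g_bound_def by (rule divide_left_mono[OF le C pos])
qed

lemma g_lim: "(g_bound \<longlongrightarrow> 0) at_top"
proof -
  define C where "C = 1 + 2 * exp (4 / exp 1) + 2 * exp (8 / exp 1) + exp (32 / exp (1::real))"
  have "((\<lambda>x::real. x powr (-1/4)) \<longlongrightarrow> 0) at_top"
    by (rule tendsto_neg_powr) (auto simp: filterlim_ident)
  then have "((\<lambda>x::real. C * x powr (-1/4)) \<longlongrightarrow> 0) at_top"
    by (rule tendsto_mult_right_zero)
  moreover have "\<forall>\<^sub>F x in at_top. C * x powr (-1/4) = g_bound x"
  proof (intro always_eventually allI)
    fix x :: real
    have h: "x powr (-1/4) = inverse (x powr (1/4))" using powr_minus[of x "1/4"] by simp
    show "C * x powr (-1/4) = g_bound x" unfolding g_bound_def C_def h by (rule divide_inverse[symmetric])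
  qed
  ultimately show ?thesis by (rule Lim_transform_eventually)
qed

theorem mainTheorem8:
  shows "(\<forall>n\<ge>2. invertible_mat (Gamma n))
       \<and> (\<forall>n\<ge>2. max_norm (minv (Gamma n)) \<le> 4)
       \<and> (\<forall>\<alpha>::real. \<forall>n::nat. \<alpha> \<ge> 1 \<longrightarrow> n \<ge> 2 \<longrightarrow>
            (let m = (n - 1)^2 in
              (\<Sum>k=1..m. (\<alpha> * real m) powr (- inv_schur (minv (Gamma n)) k)))
            \<le> g_bound \<alpha>)
       \<and> (\<forall>x y. 1 \<le> x \<longrightarrow> x \<le> y \<longrightarrow> g_bound y \<le> g_bound x)
       \<and> (g_bound \<longlongrightarrow> 0) at_top"
proof (intro conjI allI impI)
  fix n :: nat assume "n \<ge> 2"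
  then show "invertible_mat (Gamma n)" by (rule minv_Gamma)
next
  fix n :: nat assume n: "n \<ge> 2"
  show "max_norm (minv (Gamma n)) \<le> 4"
    unfolding minv_Gamma(1)[OF n] by (rule max_norm_Psi) (use n in simp)
next
  fix \<alpha> :: real and n :: nat assume a: "\<alpha> \<ge> 1" and n: "n \<ge> 2"
  show "(let m = (n - 1)^2 in
              (\<Sum>k=1..m. (\<alpha> * real m) powr (- inv_schur (minv (Gamma n)) k))) \<le> g_bound \<alpha>"
    unfolding Let_def minv_Gamma(1)[OF n] by (rule sum_part[OF a]) (use n in simp)
next
  fix x y :: real assume "1 \<le> x" "x \<le> y"
  then show "g_bound y \<le> g_bound x" by (rule g_mono)
next
  show "(g_bound \<longlongrightarrow> 0) at_top" by (rule g_lim)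
qed


end
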